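(* Let $\mathcal{G}=(\mathcal{V},\mathcal{E})$ be an unweighted finite simple graph and $f:\mathcal{V}\to\mathbb{R}$ a filtering function. Let $u\in\mathcal{V}$ be dominated by $v\in\mathcal{V}$ with $f(u)\leq f(v)$. Then for every $k\ge 0$, the $k$-th persistence diagrams of the superlevel filtrations of $\mathcal{G}$ and of $\mathcal{G}-\{u\}$ (with $f$ restricted and the same thresholds) coincide: $PD^{\mathrm{v}}_k(\mathcal{G},f)=PD^{\mathrm{v}}_k(\mathcal{G}-\{u\},f)$. In particular, if $f$ is the degree function of $\mathcal{G}$, this holds for every dominated vertex $u$.
   Context: $N(w)$ is the closed neighborhood of $w$; $u$ is dominated by $v\ne u$ if $N(u)\subset N(v)$. $\mathcal{G}-\{u\}$ deletes $u$ and its incident edges. With thresholds $\alpha_0<\dots<\alpha_m$ spanning the range of $f$, the superlevel filtration consists of the clique (flag) complexes of the subgraphs induced by $\{w: f(w)\ge\alpha_i\}$, ordered by decreasing $\alpha_i$; $PD^{\mathrm{v}}_k$ is the $k$-th persistence diagram (field coefficients) of this filtration. *)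

theory Defs
  imports Complex_Main "HOL-Library.Function_Algebras"
begin

definition simple_graph :: "'v set \<Rightarrow> 'v set set \<Rightarrow> bool" where
  "simple_graph V E \<longleftrightarrow> finite V \<and> (\<forall>e\<in>E. e \<subseteq> V \<and> card e = 2)"

definition closed_nbhd :: "'v set set \<Rightarrow> 'v \<Rightarrow> 'v set" where
  "closed_nbhd E w = insert w {x. {w, x} \<in> E}"

definition dominated_by :: "'v set \<Rightarrow> 'v set set \<Rightarrow> 'v \<Rightarrow> 'v \<Rightarrow> bool" where
  "dominated_by V E u v \<longleftrightarrow> u \<in> V \<and> v \<in> V \<and> u \<noteq> v \<and> closed_nbhd E u \<subseteq> closed_nbhd E v"

definition del_vertex_V :: "'v set \<Rightarrow> 'v \<Rightarrow> 'v set" where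
  "del_vertex_V V u = V - {u}"

definition del_vertex_E :: "'v set set \<Rightarrow> 'v \<Rightarrow> 'v set set" where
  "del_vertex_E E u = {e \<in> E. u \<notin> e}"

definition degree :: "'v set set \<Rightarrow> 'v \<Rightarrow> real" where
  "degree E w = real (card {e \<in> E. w \<in> e})"

definition flag_complex :: "'v set set \<Rightarrow> 'v set \<Rightarrow> 'v set set" where
  "flag_complex E W = {\<sigma>. \<sigma> \<noteq> {} \<and> finite \<sigma> \<and> \<sigma> \<subseteq> W \<and>
      (\<forall>x\<in>\<sigma>. \<forall>y\<in>\<sigma>. x \<noteq> y \<longrightarrow> {x, y} \<in> E)}"

text \<open>Thresholds alpha 0 < ... < alpha m; step j of the superlevel filtration
  (j = 0..m, decreasing thresholds) is the clique complex of the subgraph induced by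
  the vertices w with f w >= alpha (m - j).\<close>
definition superlevel_filtration ::
  "'v set \<Rightarrow> 'v set set \<Rightarrow> ('v \<Rightarrow> real) \<Rightarrow> (nat \<Rightarrow> real) \<Rightarrow> nat \<Rightarrow> nat \<Rightarrow> 'v set set" where
  "superlevel_filtration V E f \<alpha> m j = flag_complex E {w \<in> V. f w \<ge> \<alpha> (m - j)}"

text \<open>Simplices are finite vertex sets, oriented by the linear order of the vertex type.
  Chains are functions from vertex sets to the field, supported on simplices.\<close>

definition chains :: "'a::field itself \<Rightarrow> nat \<Rightarrow> 'v set set \<Rightarrow> ('v set \<Rightarrow> 'a) set" where
  "chains _ k K = {c. \<forall>\<sigma>. c \<sigma> \<noteq> 0 \<longrightarrow> \<sigma> \<in> K \<and> card \<sigma> = Suc k}"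

text \<open>The boundary of 0-chains is 0 (unreduced homology).\<close>
definition boundary :: "'v::linorder set set \<Rightarrow> ('v set \<Rightarrow> 'a::field) \<Rightarrow> 'v set \<Rightarrow> 'a" where
  "boundary K c \<tau> = (if \<tau> = {} then 0 else
     (\<Sum>x\<in>\<Union>K - \<tau>. (-1) ^ card {y\<in>\<tau>. y < x} * c (insert x \<tau>)))"

definition cycles :: "'a::field itself \<Rightarrow> nat \<Rightarrow> 'v::linorder set set \<Rightarrow> ('v set \<Rightarrow> 'a) set" where
  "cycles A k K = {c \<in> chains A k K. boundary K c = 0}"

definition boundaries :: "'a::field itself \<Rightarrow> nat \<Rightarrow> 'v::linorder set set \<Rightarrow> ('v set \<Rightarrow> 'a) set" where
  "boundaries A k K = boundary K ` chains A (Suc k) K"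

definition fdim :: "'a::field itself \<Rightarrow> ('b \<Rightarrow> 'a) set \<Rightarrow> nat" where
  "fdim _ S = vector_space.dim (\<lambda>(r::'a) (c::'b \<Rightarrow> 'a) x. r * c x) S"

text \<open>Persistent Betti number beta_k^{i,j} of a filtration K 0, ..., K m (i <= j <= m):
  rank of H_k(K i) -> H_k(K j), i.e. dim Z_k(K i) - dim (Z_k(K i) \<inter> B_k(K j)).\<close>
definition pers_betti ::
  "'a::field itself \<Rightarrow> nat \<Rightarrow> (nat \<Rightarrow> 'v::linorder set set) \<Rightarrow> nat \<Rightarrow> nat \<Rightarrow> nat \<Rightarrow> int" where
  "pers_betti A k K m i j = (if i \<le> j \<and> j \<le> m then
      int (fdim A (cycles A k (K i))) - int (fdim A (cycles A k (K i) \<inter> boundaries A k (K j)))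
    else 0)"

text \<open>k-th persistence diagram of the filtration K 0 \<subseteq> ... \<subseteq> K m, as the
  multiplicity function of (birth index b, death index d) with b < d \<le> m + 1,
  d = m + 1 meaning the class never dies (essential class). Multiplicities by the
  standard inclusion-exclusion of persistent Betti numbers.\<close>
definition persistence_diagram ::
  "'a::field itself \<Rightarrow> nat \<Rightarrow> (nat \<Rightarrow> 'v::linorder set set) \<Rightarrow> nat \<Rightarrow> nat \<times> nat \<Rightarrow> int" where
  "persistence_diagram A k K m = (\<lambda>(b, d).
     if b < d \<and> d \<le> Suc m then
       pers_betti A k K m b (d - 1) - pers_betti A k K m b d
       - (if b = 0 then 0 else pers_betti A k K m (b - 1) (d - 1) - pers_betti A k K m (b - 1) d)
     else 0)"

definition PD_v ::
  "'a::field itself \<Rightarrow> nat \<Rightarrow> 'v::linorder set \<Rightarrow> 'v set set \<Rightarrow> ('v \<Rightarrow> real) \<Rightarrow> (nat \<Rightarrow> real) \<Rightarrow> nat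
     \<Rightarrow> nat \<times> nat \<Rightarrow> int" where
  "PD_v A k V E f \<alpha> m = persistence_diagram A k (superlevel_filtration V E f \<alpha> m) m"

definition thresholds_for :: "'v set \<Rightarrow> ('v \<Rightarrow> real) \<Rightarrow> (nat \<Rightarrow> real) \<Rightarrow> nat \<Rightarrow> bool" where
  "thresholds_for V f \<alpha> m \<longleftrightarrow> (\<forall>i<m. \<alpha> i < \<alpha> (Suc i)) \<and> (\<forall>w\<in>V. \<alpha> 0 \<le> f w \<and> f w \<le> \<alpha> m)"

end

theory Submission
  imports Defs
begin


context vector_space begin

lemma indep_explicit_fin:
  assumes "finite B"
  shows "independent B \<longleftrightarrow> (\<forall>c. (\<Sum>v\<in>B. c v *s v) = 0 \<longrightarrow> (\<forall>v\<in>B. c v = 0))"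
proof
  assume "independent B" then show "\<forall>c. (\<Sum>v\<in>B. c v *s v) = 0 \<longrightarrow> (\<forall>v\<in>B. c v = 0)"
    using independentD[of B B] assms by blast
next
  assume H: "\<forall>c. (\<Sum>v\<in>B. c v *s v) = 0 \<longrightarrow> (\<forall>v\<in>B. c v = 0)"
  show "independent B"
    unfolding independent_explicit_module
  proof (intro allI impI)
    fix t u v assume t: "finite t" "t \<subseteq> B" "(\<Sum>v\<in>t. u v *s v) = 0" "v \<in> t"
    define c where "c v = (if v \<in> t then u v else 0)" for v
    have "(\<Sum>v\<in>B. c v *s v) = (\<Sum>v\<in>t. c v *s v)"
      by (rule sum.mono_neutral_right) (use assms t in \<open>auto simp: c_def\<close>)
    also have "\<dots> = 0" using t(3) by (simp add: c_def)
    finally have "\<forall>w\<in>B. c w = 0" using H by blast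
    then have "c v = 0" using t by blast
    then show "u v = 0" using t(4) by (simp add: c_def)
  qed
qed

lemma dim_sums_Int_fin:
  assumes "subspace S" "subspace T" and F: "finite F" "S \<subseteq> span F" "T \<subseteq> span F"
  shows "dim {x + y |x y. x \<in> S \<and> y \<in> T} + dim(S \<inter> T) = dim S + dim T" (is "dim ?ST + _ = _")
proof -
  obtain B where B: "B \<subseteq> S \<inter> T" "S \<inter> T \<subseteq> span B"
             and indB: "independent B"
             and cardB: "card B = dim (S \<inter> T)"
    using basis_exists by metis
  then obtain C D where "B \<subseteq> C" "C \<subseteq> S" "independent C" "S \<subseteq> span C"
                    and "B \<subseteq> D" "D \<subseteq> T" "independent D" "T \<subseteq> span D"
    using maximal_independent_subset_extend
    by (metis Int_subset_iff \<open>B \<subseteq> S \<inter> T\<close> indB)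
  note CD = this
  have "B \<subseteq> span F" using B(1) F(2) by blast
  then have "finite B" using independent_span_bound[OF F(1) indB] by simp
  have "C \<subseteq> span F" using CD(2) F(2) by blast
  then have "finite C" using independent_span_bound[OF F(1) CD(3)] by simp
  have "D \<subseteq> span F" using CD(6) F(3) by blast
  then have "finite D" using independent_span_bound[OF F(1) CD(7)] by simp
  have Beq: "B = C \<inter> D"
  proof (rule spanning_subset_independent [symmetric])
    show "independent (C \<inter> D)"
      by (meson \<open>independent C\<close> independent_mono inf.cobounded1)
  qed (use B \<open>C \<subseteq> S\<close> \<open>D \<subseteq> T\<close> \<open>B \<subseteq> C\<close> \<open>B \<subseteq> D\<close> in auto)
  then have Deq: "D = B \<union> (D - C)"
    by blast
  have CUD: "C \<union> D \<subseteq> ?ST"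
  proof (simp, intro conjI)
    show "C \<subseteq> ?ST"
      using span_zero span_minimal [OF _ \<open>subspace T\<close>] \<open>C \<subseteq> S\<close> by force
    show "D \<subseteq> ?ST"
      using span_zero span_minimal [OF _ \<open>subspace S\<close>] \<open>D \<subseteq> T\<close> by force
  qed
  have "a v = 0" if 0: "(\<Sum>v\<in>C. a v *s v) + (\<Sum>v\<in>D - C. a v *s v) = 0"
                 and v: "v \<in> C \<union> (D-C)" for a v
  proof -
    have CsS: "\<And>x. x \<in> C \<Longrightarrow> a x *s x \<in> S"
      using \<open>C \<subseteq> S\<close> \<open>subspace S\<close> subspace_scale by auto
    have eq: "(\<Sum>v\<in>D - C. a v *s v) = - (\<Sum>v\<in>C. a v *s v)"
      using that add_eq_0_iff by blast
    have "(\<Sum>v\<in>D - C. a v *s v) \<in> S"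
      by (simp add: eq CsS \<open>subspace S\<close> subspace_neg subspace_sum)
    moreover have "(\<Sum>v\<in>D - C. a v *s v) \<in> T"
      apply (rule subspace_sum [OF \<open>subspace T\<close>])
      by (meson DiffD1 \<open>D \<subseteq> T\<close> \<open>subspace T\<close> subset_eq subspace_def)
    ultimately have "(\<Sum>v \<in> D-C. a v *s v) \<in> span B"
      using B by blast
    then obtain e where e: "(\<Sum>v\<in>B. e v *s v) = (\<Sum>v \<in> D-C. a v *s v)"
      using span_finite [OF \<open>finite B\<close>] by force
    define cc where "cc x = (if x \<in> B then a x + e x else a x)" for x
    have [simp]: "C \<inter> B = B" "D \<inter> B = B" "C \<inter> - B = C-D" "B \<inter> (D - C) = {}"
      using \<open>B \<subseteq> C\<close> \<open>B \<subseteq> D\<close> Beq by blast+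
    have f2: "(\<Sum>v\<in>C \<inter> D. e v *s v) = (\<Sum>v\<in>D - C. a v *s v)"
      using Beq e by presburger
    have f3: "(\<Sum>v\<in>C \<union> D. a v *s v) = (\<Sum>v\<in>C - D. a v *s v) + (\<Sum>v\<in>D - C. a v *s v) + (\<Sum>v\<in>C \<inter> D. a v *s v)"
      using \<open>finite C\<close> \<open>finite D\<close> sum.union_diff2 by blast
    have f4: "(\<Sum>v\<in>C \<union> (D - C). a v *s v) = (\<Sum>v\<in>C. a v *s v) + (\<Sum>v\<in>D - C. a v *s v)"
      by (meson Diff_disjoint \<open>finite C\<close> \<open>finite D\<close> finite_Diff sum.union_disjoint)
    have "(\<Sum>v\<in>C. cc v *s v) = 0"
      using 0 f2 f3 f4
      apply (simp add: cc_def Beq \<open>finite C\<close> sum.If_cases algebra_simps sum.distrib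
          if_distrib if_distribR)
      apply (simp add: add.commute add.left_commute diff_eq)
      done
    then have "\<And>v. v \<in> C \<Longrightarrow> cc v = 0"
      using indep_explicit_fin \<open>independent C\<close> \<open>finite C\<close> by blast
    then have C0: "\<And>v. v \<in> C - B \<Longrightarrow> a v = 0"
      by (simp add: cc_def Beq) meson
    then have [simp]: "(\<Sum>x\<in>C - B. a x *s x) = 0"
      by simp
    have "(\<Sum>x\<in>C. a x *s x) = (\<Sum>x\<in>B. a x *s x)"
    proof -
      have "C - D = C - B"
        using Beq by blast
      then show ?thesis
        using Beq \<open>(\<Sum>x\<in>C - B. a x *s x) = 0\<close> f3 f4 by auto
    qed
    with 0 have Dcc0: "(\<Sum>v\<in>D. a v *s v) = 0"
      by (subst Deq) (simp add: \<open>finite B\<close> \<open>finite D\<close> sum_Un)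
    then have D0: "\<And>v. v \<in> D \<Longrightarrow> a v = 0"
      using indep_explicit_fin \<open>independent D\<close> \<open>finite D\<close> by blast
    show ?thesis
      using v C0 D0 Beq by blast
  qed
  then have "independent (C \<union> (D - C))"
    using indep_explicit_fin[of "C \<union> (D - C)"] \<open>finite C\<close> \<open>finite D\<close>
    by (simp add: sum_Un del: Un_Diff_cancel)
  then have indCUD: "independent (C \<union> D)" by simp
  have "dim (S \<inter> T) = card B"
    by (rule dim_unique [OF B indB refl])
  moreover have "dim S = card C"
    by (metis \<open>C \<subseteq> S\<close> \<open>independent C\<close> \<open>S \<subseteq> span C\<close> basis_card_eq_dim)
  moreover have "dim T = card D"
    by (metis \<open>D \<subseteq> T\<close> \<open>independent D\<close> \<open>T \<subseteq> span D\<close> basis_card_eq_dim)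
  moreover have "dim ?ST = card(C \<union> D)"
  proof -
    have *: "\<And>x y. \<lbrakk>x \<in> S; y \<in> T\<rbrakk> \<Longrightarrow> x + y \<in> span (C \<union> D)"
      by (meson \<open>S \<subseteq> span C\<close> \<open>T \<subseteq> span D\<close> span_add span_mono subsetCE sup.cobounded1 sup.cobounded2)
    show ?thesis
      by (auto intro: * dim_unique [OF CUD _ indCUD refl])
  qed
  ultimately show ?thesis
    using \<open>B = C \<inter> D\<close> [symmetric]
    by (simp add:  \<open>finite C\<close> \<open>finite D\<close> card_Un_Int)
qed



end

abbreviation fscl :: "'a::field \<Rightarrow> ('b \<Rightarrow> 'a) \<Rightarrow> ('b \<Rightarrow> 'a)" where
  "fscl \<equiv> (\<lambda>r c x. r * c x)"

lemma vs_fsc: "vector_space (fscl :: 'a::field \<Rightarrow> ('b \<Rightarrow> 'a) \<Rightarrow> ('b \<Rightarrow> 'a))"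
  by unfold_locales (auto simp: algebra_simps fun_eq_iff)

lemma mod_fscl: "module (fscl :: 'a::field \<Rightarrow> ('b \<Rightarrow> 'a) \<Rightarrow> ('b \<Rightarrow> 'a))"
  using vs_fsc module_iff_vector_space by blast



lemma fdim_eq: "fdim TYPE('a::field) S = vector_space.dim (fscl::'a \<Rightarrow> _) S"
  by (simp add: fdim_def)

lemma sq_m1: "((-1::'a::field) ^ n) * (-1) ^ n = 1"
  by (simp add: power_mult_distrib[symmetric])

lemma boundary_add: "boundary K (c1 + c2) = boundary K c1 + boundary K c2"
  by (auto simp: boundary_def fun_eq_iff sum.distrib algebra_simps)

lemma boundary_diff: "boundary K (c1 - c2) = boundary K c1 - boundary K c2"
  by (auto simp: boundary_def fun_eq_iff sum_subtractf algebra_simps)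

lemma boundary_scale: "boundary K (\<lambda>x. r * c x) = (\<lambda>x. r * boundary K c x)"
  by (auto simp: boundary_def fun_eq_iff sum_distrib_left algebra_simps)

lemma boundary_zero: "boundary K 0 = 0"
  by (auto simp: boundary_def fun_eq_iff)

lemma chains_subspace: "module.subspace fscl (chains TYPE('a::field) k K)"
  unfolding module.subspace_def[OF mod_fscl] chains_def by (auto) (metis add.left_neutral)+

lemma cycles_subspace: "module.subspace fscl (cycles TYPE('a::field) k K)"
  unfolding module.subspace_def[OF mod_fscl] cycles_def chains_def
  by (auto simp: boundary_add boundary_zero boundary_scale fun_eq_iff) (metis add.left_neutral)+

lemma boundaries_subspace: "module.subspace fscl (boundaries TYPE('a::field) k K)"
proof -
  have "0 \<in> boundaries TYPE('a) k K"
    unfolding boundaries_def chains_def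
    by (rule image_eqI[of _ _ 0]) (auto simp: boundary_zero)
  moreover have "x + y \<in> boundaries TYPE('a) k K" if "x \<in> boundaries TYPE('a) k K" "y \<in> boundaries TYPE('a) k K" for x y
    using that unfolding boundaries_def chains_def
    by (auto simp: boundary_add[symmetric] intro!: image_eqI) (metis add.left_neutral)+
  moreover have "(\<lambda>z. r * x z) \<in> boundaries TYPE('a) k K" if "x \<in> boundaries TYPE('a) k K" for x r
    using that unfolding boundaries_def chains_def
    by (auto simp: boundary_scale[symmetric] intro!: image_eqI)
  ultimately show ?thesis unfolding module.subspace_def[OF mod_fscl] by blast
qed

lemma sum_fun_app: "(\<Sum>\<sigma>\<in>K. g \<sigma>) (\<rho>::'b) = (\<Sum>\<sigma>\<in>K. g \<sigma> \<rho>)"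
  by (induct K rule: infinite_finite_induct) auto

lemma chains_span:
  assumes "finite K"
  shows "chains TYPE('a::field) k K \<subseteq> module.span fscl ((\<lambda>\<sigma> \<rho>. if \<rho> = \<sigma> then 1 else 0) ` K)"
proof
  fix c :: "'b set \<Rightarrow> 'a" assume c: "c \<in> chains TYPE('a) k K"
  have "c = (\<Sum>\<sigma>\<in>K. (\<lambda>\<rho>. c \<sigma> * (if \<rho> = \<sigma> then 1 else 0)))"
  proof
    fix \<rho>
    have "(\<Sum>\<sigma>\<in>K. (\<lambda>\<rho>. c \<sigma> * (if \<rho> = \<sigma> then 1 else 0))) \<rho> = (\<Sum>\<sigma>\<in>K. c \<sigma> * (if \<rho> = \<sigma> then 1 else 0))"
      by (simp add: sum_fun_app) 
    also have "\<dots> = (if \<rho> \<in> K then c \<rho> else 0)"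
      using assms by (simp add: if_distrib[of "\<lambda>x. _ * x"] sum.delta cong: if_cong)
    also have "\<dots> = c \<rho>" using c by (auto simp: chains_def)
    finally show "c \<rho> = (\<Sum>\<sigma>\<in>K. (\<lambda>\<rho>. c \<sigma> * (if \<rho> = \<sigma> then 1 else 0))) \<rho>" ..
  qed
  also have "\<dots> \<in> module.span fscl ((\<lambda>\<sigma> \<rho>. if \<rho> = \<sigma> then 1 else 0) ` K)"
    by (intro module.span_sum[OF mod_fscl] module.span_scale[OF mod_fscl, where c = "c _", simplified] module.span_base[OF mod_fscl]) auto
  finally show "c \<in> module.span fscl ((\<lambda>\<sigma> \<rho>. if \<rho> = \<sigma> then 1 else 0) ` K)" .
qed

lemma boundary_cong:
  assumes "finite (\<Union>K1)" "finite (\<Union>K2)" "\<forall>\<sigma>. c \<sigma> \<noteq> 0 \<longrightarrow> \<sigma> \<in> K1 \<and> \<sigma> \<in> K2"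
  shows "boundary K1 c = boundary K2 c"
proof
  fix \<tau>
  have e: "(\<Sum>x\<in>\<Union>Ka - \<tau>. (-1) ^ card {y\<in>\<tau>. y < x} * c (insert x \<tau>))
        = (\<Sum>x\<in>(\<Union>K1 \<inter> \<Union>K2) - \<tau>. (-1) ^ card {y\<in>\<tau>. y < x} * c (insert x \<tau>))"
    if "Ka = K1 \<or> Ka = K2" for Ka
    by (rule sum.mono_neutral_right) (use assms that in auto)
  show "boundary K1 c \<tau> = boundary K2 c \<tau>"
    unfolding boundary_def using e by simp
qed

definition dclosed :: "'v set set \<Rightarrow> bool" where
  "dclosed K \<longleftrightarrow> (\<forall>\<sigma>\<in>K. finite \<sigma> \<and> (\<forall>\<tau>. \<tau> \<noteq> {} \<longrightarrow> \<tau> \<subseteq> \<sigma> \<longrightarrow> \<tau> \<in> K))"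

lemma flag_dclosed: "dclosed (flag_complex E W)"
  unfolding dclosed_def flag_complex_def by (auto intro: finite_subset)

lemma boundary_chains:
  assumes "dclosed K" "c \<in> chains TYPE('a::field) (Suc k) K"
  shows "boundary K c \<in> chains TYPE('a) k (K :: 'v::linorder set set)"
  unfolding chains_def
proof (intro CollectI allI impI)
  fix \<tau> assume "boundary K c \<tau> \<noteq> 0"
  then have ne: "\<tau> \<noteq> {}" and "(\<Sum>x\<in>\<Union>K - \<tau>. (-1) ^ card {y\<in>\<tau>. y < x} * c (insert x \<tau>)) \<noteq> 0"
    unfolding boundary_def by (auto split: if_splits)
  then obtain x where x: "x \<in> \<Union>K - \<tau>" "c (insert x \<tau>) \<noteq> 0"
    by (metis (no_types, lifting) mult_zero_right sum.neutral)
  then have i: "insert x \<tau> \<in> K" "card (insert x \<tau>) = Suc (Suc k)"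
    using assms(2) unfolding chains_def by auto
  have dc: "finite (insert x \<tau>) \<and> (\<forall>t. t \<noteq> {} \<longrightarrow> t \<subseteq> insert x \<tau> \<longrightarrow> t \<in> K)"
    using assms(1) i(1) unfolding dclosed_def by (rule bspec)
  then have f: "finite (insert x \<tau>)" by (rule conjunct1)
  have "\<tau> \<in> K" using dc ne subset_insertI[of \<tau> x] by blast
  moreover have "card \<tau> = Suc k" using i(2) f x by (simp add: card_insert_if)
  ultimately show "\<tau> \<in> K \<and> card \<tau> = Suc k" by blast
qed

lemma bd_swap:
  fixes x y :: "'v::linorder"
  assumes "finite \<tau>" "x \<notin> \<tau>" "y \<notin> \<tau>" "x < y"
  shows "(-1::'a::field) ^ card {z\<in>insert x \<tau>. z < y} = - ((-1) ^ card {z\<in>\<tau>. z < y})"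
    and "(-1::'a::field) ^ card {z\<in>insert y \<tau>. z < x} = (-1) ^ card {z\<in>\<tau>. z < x}"
proof -
  have "{z\<in>insert x \<tau>. z < y} = insert x {z\<in>\<tau>. z < y}" using assms by auto
  then have "card {z\<in>insert x \<tau>. z < y} = Suc (card {z\<in>\<tau>. z < y})"
    using assms by simp
  then show "(-1::'a::field) ^ card {z\<in>insert x \<tau>. z < y} = - ((-1) ^ card {z\<in>\<tau>. z < y})" by simp
  have "{z\<in>insert y \<tau>. z < x} = {z\<in>\<tau>. z < x}" using assms by auto
  then show "(-1::'a::field) ^ card {z\<in>insert y \<tau>. z < x} = (-1) ^ card {z\<in>\<tau>. z < x}" by simp
qed

lemma antisym_double_sum:
  fixes F :: "'v::linorder \<Rightarrow> 'v \<Rightarrow> 'a::ab_group_add"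
  assumes "finite A" "\<And>x y. x \<in> A \<Longrightarrow> y \<in> A \<Longrightarrow> x < y \<Longrightarrow> F y x = - F x y"
  shows "(\<Sum>x\<in>A. \<Sum>y\<in>A - {x}. F x y) = 0"
proof -
  define G1 where "G1 x y = (if x < y then F x y else 0)" for x y
  define G2 where "G2 x y = (if y < x then F x y else 0)" for x y
  have "(\<Sum>x\<in>A. \<Sum>y\<in>A - {x}. F x y) = (\<Sum>x\<in>A. \<Sum>y\<in>A. G1 x y + G2 x y)"
  proof (rule sum.cong[OF refl])
    fix x assume "x \<in> A"
    have "(\<Sum>y\<in>A. G1 x y + G2 x y) = (\<Sum>y\<in>A - {x}. G1 x y + G2 x y)"
      by (rule sum.mono_neutral_right) (use assms in \<open>auto simp: G1_def G2_def\<close>)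
    also have "\<dots> = (\<Sum>y\<in>A - {x}. F x y)"
      by (rule sum.cong) (auto simp: G1_def G2_def)
    finally show "(\<Sum>y\<in>A - {x}. F x y) = (\<Sum>y\<in>A. G1 x y + G2 x y)" ..
  qed
  also have "\<dots> = (\<Sum>x\<in>A. \<Sum>y\<in>A. G1 x y) + (\<Sum>x\<in>A. \<Sum>y\<in>A. G2 x y)"
    by (simp add: sum.distrib)
  also have "(\<Sum>x\<in>A. \<Sum>y\<in>A. G2 x y) = (\<Sum>y\<in>A. \<Sum>x\<in>A. G2 x y)"
    by (rule sum.swap)
  also have "\<dots> = (\<Sum>y\<in>A. \<Sum>x\<in>A. - G1 y x)"
    using assms(2) by (intro sum.cong refl) (auto simp: G1_def G2_def)
  also have "\<dots> = - (\<Sum>x\<in>A. \<Sum>y\<in>A. G1 x y)"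
    by (simp add: sum_negf)
  finally show ?thesis by simp
qed

lemma boundary_boundary:
  fixes c :: "'v::linorder set \<Rightarrow> 'a::field"
  assumes "finite (\<Union>K)" "\<forall>\<sigma>. c \<sigma> \<noteq> 0 \<longrightarrow> finite \<sigma>"
  shows "boundary K (boundary K c) = 0"
proof
  fix \<tau>
  show "boundary K (boundary K c) \<tau> = 0 \<tau>"
  proof (cases "\<tau> = {}")
    case True then show ?thesis by (simp add: boundary_def)
  next
    case ne: False
    show ?thesis
    proof (cases "finite \<tau>")
      case False
      have "boundary K c (insert x \<tau>) = 0" for x
        using False assms(2) by (auto simp: boundary_def intro!: sum.neutral)
      then show ?thesis by (simp add: boundary_def)
    next
      case fin: True
      define A where "A = \<Union>K - \<tau>"
      define F where "F x y = (-1::'a) ^ card {z\<in>\<tau>. z < x} * ((-1) ^ card {z\<in>insert x \<tau>. z < y}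
           * c (insert y (insert x \<tau>)))" for x y
      have "boundary K (boundary K c) \<tau> = (\<Sum>x\<in>A. \<Sum>y\<in>A - {x}. F x y)"
        unfolding boundary_def using ne
        by (auto simp: A_def F_def sum_distrib_left Diff_insert2[symmetric] intro!: sum.cong)
      also have "\<dots> = 0"
      proof (rule antisym_double_sum)
        show "finite A" using assms(1) by (simp add: A_def)
        fix x y assume xy: "x \<in> A" "y \<in> A" "x < y"
        then have "x \<notin> \<tau>" "y \<notin> \<tau>" by (auto simp: A_def)
        note s = bd_swap[OF fin this xy(3), where 'a='a]
        show "F y x = - F x y"
          unfolding F_def s by (simp add: insert_commute)
      qed
      finally show ?thesis by simp
    qed
  qed
qed

locale collapse =
  fixes E :: "'v::linorder set set" and W :: "'v set" and u v :: 'v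
  assumes finW: "finite W" and uW: "u \<in> W" and vW: "v \<in> W" and uv: "u \<noteq> v"
    and euv: "{u, v} \<in> E" and dom: "\<And>x. {u, x} \<in> E \<Longrightarrow> x = v \<or> {v, x} \<in> E"
begin

abbreviation "K \<equiv> flag_complex E W"

lemma finUK: "finite (\<Union>K)"
  by (rule finite_subset[OF _ finW]) (auto simp: flag_complex_def)

lemma cone: assumes "\<sigma> \<in> K" "u \<in> \<sigma>" shows "insert v \<sigma> \<in> K"
proof -
  have adj: "{v, y} \<in> E" if "y \<in> \<sigma>" "y \<noteq> v" for y
  proof (cases "y = u")
    case True then show ?thesis using euv by (simp add: insert_commute)
  next
    case False
    then have "{u, y} \<in> E" using assms that unfolding flag_complex_def by auto
    then show ?thesis using dom that by blast
  qed
  show ?thesis using assms vW adj unfolding flag_complex_def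
    by (auto simp: insert_commute)
qed

lemma vK: "v \<in> \<Union>K"
proof -
  have "{v} \<in> K" using vW by (auto simp: flag_complex_def)
  then show ?thesis by blast
qed

definition dP :: "('v set \<Rightarrow> 'a::field) \<Rightarrow> 'v set \<Rightarrow> 'a" where
  "dP c \<rho> = (if u \<in> \<rho> \<and> v \<in> \<rho> then (-1) ^ card {y\<in>\<rho> - {v}. y < v} * c (\<rho> - {v}) else 0)"

lemma dP_chains:
  assumes "c \<in> chains TYPE('a::field) k K"
  shows "dP c \<in> chains TYPE('a) (Suc k) K"
  unfolding chains_def
proof (intro CollectI allI impI)
  fix \<rho> assume "dP c \<rho> \<noteq> 0"
  then have r: "u \<in> \<rho>" "v \<in> \<rho>" "c (\<rho> - {v}) \<noteq> 0" by (auto simp: dP_def split: if_splits)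
  then have "\<rho> - {v} \<in> K" "card (\<rho> - {v}) = Suc k" using assms by (auto simp: chains_def)
  moreover have "u \<in> \<rho> - {v}" using r uv by auto
  ultimately have "insert v (\<rho> - {v}) \<in> K" using cone by blast
  then have "\<rho> \<in> K" using r by (simp add: insert_absorb)
  moreover have "finite \<rho>" using \<open>\<rho> \<in> K\<close> by (auto simp: flag_complex_def)
  ultimately show "\<rho> \<in> K \<and> card \<rho> = Suc (Suc k)"
    using \<open>card (\<rho> - {v}) = Suc k\<close> r by (simp add: card_Diff_singleton)
qed

lemma dP_bd:
  assumes "u \<in> \<tau>" "v \<notin> \<tau>"
  shows "boundary K (dP c) \<tau> = (c \<tau> :: 'a::field)"
proof -
  have ne: "\<tau> \<noteq> {}" using assms by auto
  have v: "v \<in> \<Union>K - \<tau>" using vK assms by auto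
  have "boundary K (dP c) \<tau> = (\<Sum>x\<in>\<Union>K - \<tau>. (-1) ^ card {y\<in>\<tau>. y < x} * dP c (insert x \<tau>))"
    using ne by (simp add: boundary_def)
  also have "\<dots> = (-1) ^ card {y\<in>\<tau>. y < v} * dP c (insert v \<tau>)
      + (\<Sum>x\<in>\<Union>K - \<tau> - {v}. (-1) ^ card {y\<in>\<tau>. y < x} * dP c (insert x \<tau>))"
    using v finUK by (simp add: sum.remove)
  also have "(\<Sum>x\<in>\<Union>K - \<tau> - {v}. (-1) ^ card {y\<in>\<tau>. y < x} * dP c (insert x \<tau>)) = 0"
    using assms by (intro sum.neutral) (auto simp: dP_def)
  also have "dP c (insert v \<tau>) = (-1) ^ card {y\<in>\<tau>. y < v} * c \<tau>"
    using assms by (simp add: dP_def)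
  finally show ?thesis by (simp add: mult.assoc[symmetric] sq_m1)
qed

lemma vanish:
  assumes c: "c \<in> chains TYPE('a::field) k K"
    and hv: "\<And>\<tau>. c \<tau> \<noteq> 0 \<Longrightarrow> u \<in> \<tau> \<Longrightarrow> v \<in> \<tau>"
    and hb: "\<And>\<tau>. u \<in> \<tau> \<Longrightarrow> boundary K c \<tau> = 0"
    and s: "u \<in> \<sigma>"
  shows "c \<sigma> = 0"
proof (rule ccontr)
  assume nz: "c \<sigma> \<noteq> 0"
  then have vs: "v \<in> \<sigma>" using hv s by blast
  have sK: "\<sigma> \<in> K" using c nz by (auto simp: chains_def)
  define \<tau> where "\<tau> = \<sigma> - {v}"
  have ut: "u \<in> \<tau>" "v \<notin> \<tau>" using s uv by (auto simp: \<tau>_def)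
  have ins: "insert v \<tau> = \<sigma>" using vs by (auto simp: \<tau>_def)
  have v: "v \<in> \<Union>K - \<tau>" using sK vs ut by auto
  have "0 = boundary K c \<tau>" using hb ut by simp
  also have "\<dots> = (\<Sum>x\<in>\<Union>K - \<tau>. (-1) ^ card {y\<in>\<tau>. y < x} * c (insert x \<tau>))"
    using ut by (auto simp: boundary_def)
  also have "\<dots> = (-1) ^ card {y\<in>\<tau>. y < v} * c (insert v \<tau>)
      + (\<Sum>x\<in>\<Union>K - \<tau> - {v}. (-1) ^ card {y\<in>\<tau>. y < x} * c (insert x \<tau>))"
    using v finUK by (simp add: sum.remove)
  also have "(\<Sum>x\<in>\<Union>K - \<tau> - {v}. (-1) ^ card {y\<in>\<tau>. y < x} * c (insert x \<tau>)) = 0"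
    using ut hv by (intro sum.neutral) auto
  finally have "(-1) ^ card {y\<in>\<tau>. y < v} * c \<sigma> = 0" using ins by simp
  then show False using nz by simp
qed

lemma chains_fin: "c \<in> chains TYPE('a::field) k K \<Longrightarrow> \<forall>\<sigma>. c \<sigma> \<noteq> 0 \<longrightarrow> finite \<sigma>"
  by (auto simp: chains_def flag_complex_def)

lemma lemA:
  assumes z: "z \<in> chains TYPE('a::field) k K" "boundary K z = 0"
  shows "\<exists>d\<in>chains TYPE('a) (Suc k) K. z - boundary K d \<in> chains TYPE('a) k K
            \<and> (\<forall>\<sigma>. u \<in> \<sigma> \<longrightarrow> (z - boundary K d) \<sigma> = 0) \<and> boundary K (z - boundary K d) = 0"
proof (intro bexI conjI allI impI)
  let ?d = "dP z"
  show d: "?d \<in> chains TYPE('a) (Suc k) K" using dP_chains z by blast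
  show zc: "z - boundary K ?d \<in> chains TYPE('a) k K"
    using boundary_chains[OF flag_dclosed d] z(1) chains_subspace
    by (metis module.subspace_diff[OF mod_fscl] chains_subspace)
  show b0: "boundary K (z - boundary K ?d) = 0"
    using z(2) boundary_boundary[OF finUK chains_fin[OF d]] by (simp add: boundary_diff)
  fix \<sigma> assume "u \<in> \<sigma>"
  show "(z - boundary K ?d) \<sigma> = 0"
  proof (rule vanish[OF zc _ _ \<open>u \<in> \<sigma>\<close>])
    fix \<tau> assume "(z - boundary K ?d) \<tau> \<noteq> 0" "u \<in> \<tau>"
    then show "v \<in> \<tau>" using dP_bd[of \<tau> z] by auto
  next
    fix \<tau> show "boundary K (z - boundary K ?d) \<tau> = 0" using b0 by simp
  qed
qed

lemma lemB:
  assumes z: "\<forall>\<sigma>. u \<in> \<sigma> \<longrightarrow> z \<sigma> = 0" and c: "c \<in> chains TYPE('a::field) (Suc k) K"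
    and bc: "boundary K c = z"
  shows "\<exists>c'\<in>chains TYPE('a) (Suc k) K. (\<forall>\<sigma>. u \<in> \<sigma> \<longrightarrow> c' \<sigma> = 0) \<and> boundary K c' = z"
proof (intro bexI conjI allI impI)
  let ?d = "dP c"
  have d: "?d \<in> chains TYPE('a) (Suc (Suc k)) K" using dP_chains c by blast
  show cc: "c - boundary K ?d \<in> chains TYPE('a) (Suc k) K"
    using boundary_chains[OF flag_dclosed d] c
    by (metis module.subspace_diff[OF mod_fscl] chains_subspace)
  show b0: "boundary K (c - boundary K ?d) = z"
    using bc boundary_boundary[OF finUK chains_fin[OF d]] by (simp add: boundary_diff)
  fix \<sigma> assume "u \<in> \<sigma>"
  show "(c - boundary K ?d) \<sigma> = 0"
  proof (rule vanish[OF cc _ _ \<open>u \<in> \<sigma>\<close>])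
    fix \<tau> assume "(c - boundary K ?d) \<tau> \<noteq> 0" "u \<in> \<tau>"
    then show "v \<in> \<tau>" using dP_bd[of \<tau> c] by auto
  next
    fix \<tau> assume "u \<in> \<tau>" then show "boundary K (c - boundary K ?d) \<tau> = 0" using b0 z by simp
  qed
qed

end

lemma chains_mono: "K \<subseteq> L \<Longrightarrow> chains A k K \<subseteq> chains A k L"
  by (auto simp: chains_def)

lemma chains_del:
  "c \<in> chains A k K \<Longrightarrow> (\<forall>\<sigma>. u \<in> \<sigma> \<longrightarrow> c \<sigma> = 0) \<Longrightarrow> c \<in> chains A k {\<sigma>\<in>K. u \<notin> \<sigma>}"
  by (auto simp: chains_def)

lemma chains_del_vanish: "c \<in> chains A k {\<sigma>\<in>K. u \<notin> \<sigma>} \<Longrightarrow> u \<in> \<sigma> \<Longrightarrow> c \<sigma> = 0"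
  by (auto simp: chains_def)

lemma flag_fin: "finite W \<Longrightarrow> finite (flag_complex E W)"
  by (rule finite_subset[of _ "Pow W"]) (auto simp: flag_complex_def)

lemma flag_Ufin: "finite W \<Longrightarrow> finite (\<Union>(flag_complex E W))"
  by (rule finite_subset[of _ W]) (auto simp: flag_complex_def)

lemma flag_mono: "W1 \<subseteq> W2 \<Longrightarrow> flag_complex E W1 \<subseteq> flag_complex E W2"
  by (auto simp: flag_complex_def)

lemma del_Ufin: "finite W \<Longrightarrow> finite (\<Union>{\<sigma>\<in>flag_complex E W. u \<notin> \<sigma>})"
  by (rule finite_subset[of _ W]) (auto simp: flag_complex_def)

lemma bd_del:
  assumes "finite W" "c \<in> chains A k {\<sigma>\<in>flag_complex E W. u \<notin> \<sigma>}"
  shows "boundary {\<sigma>\<in>flag_complex E W. u \<notin> \<sigma>} c = boundary (flag_complex E W) c"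
  by (rule boundary_cong[OF del_Ufin[OF assms(1)] flag_Ufin[OF assms(1)]])
     (use assms(2) in \<open>auto simp: chains_def\<close>)

lemma lemA':
  fixes E :: "'v::linorder set set"
  assumes fin: "finite W" and g: "u \<noteq> v" "{u, v} \<in> E" "\<And>x. {u, x} \<in> E \<Longrightarrow> x = v \<or> {v, x} \<in> E"
    and h: "u \<in> W \<Longrightarrow> v \<in> W"
    and z: "z \<in> chains TYPE('a::field) k (flag_complex E W)" "boundary (flag_complex E W) z = 0"
  shows "\<exists>d\<in>chains TYPE('a) (Suc k) (flag_complex E W).
     z - boundary (flag_complex E W) d \<in> chains TYPE('a) k {\<sigma>\<in>flag_complex E W. u \<notin> \<sigma>}
     \<and> boundary (flag_complex E W) (z - boundary (flag_complex E W) d) = 0"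
proof (cases "u \<in> W")
  case True
  interpret collapse E W u v using fin g h True by unfold_locales auto
  from lemA[OF z] show ?thesis by (blast intro: chains_del)
next
  case False
  then have "{\<sigma>\<in>flag_complex E W. u \<notin> \<sigma>} = flag_complex E W"
    by (auto simp: flag_complex_def)
  note eq = this
  show ?thesis
  proof (rule bexI[of _ 0])
    show "0 \<in> chains TYPE('a) (Suc k) (flag_complex E W)" by (simp add: chains_def)
    show "z - boundary (flag_complex E W) 0 \<in> chains TYPE('a) k {\<sigma> \<in> flag_complex E W. u \<notin> \<sigma>} \<and>
      boundary (flag_complex E W) (z - boundary (flag_complex E W) 0) = 0"
      unfolding eq using z by (simp add: boundary_zero)
  qed
qed

lemma lemB':
  fixes E :: "'v::linorder set set"
  assumes fin: "finite W" and g: "u \<noteq> v" "{u, v} \<in> E" "\<And>x. {u, x} \<in> E \<Longrightarrow> x = v \<or> {v, x} \<in> E"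
    and h: "u \<in> W \<Longrightarrow> v \<in> W"
    and z: "z \<in> chains TYPE('a::field) k {\<sigma>\<in>flag_complex E W. u \<notin> \<sigma>}"
    and c: "c \<in> chains TYPE('a) (Suc k) (flag_complex E W)" "boundary (flag_complex E W) c = z"
  shows "\<exists>c'\<in>chains TYPE('a) (Suc k) {\<sigma>\<in>flag_complex E W. u \<notin> \<sigma>}. boundary (flag_complex E W) c' = z"
proof (cases "u \<in> W")
  case True
  interpret collapse E W u v using fin g h True by unfold_locales auto
  have "\<forall>\<sigma>. u \<in> \<sigma> \<longrightarrow> z \<sigma> = 0" using chains_del_vanish[OF z] by blast
  from lemB[OF this c] show ?thesis by (blast intro: chains_del)
next
  case False
  then have "{\<sigma>\<in>flag_complex E W. u \<notin> \<sigma>} = flag_complex E W"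
    by (auto simp: flag_complex_def)
  then show ?thesis using c by auto
qed

lemma rank_eq:
  fixes E :: "'v::linorder set set"
  assumes fin: "finite W2" and W12: "W1 \<subseteq> W2"
    and g: "u \<noteq> v" "{u, v} \<in> E" "\<And>x. {u, x} \<in> E \<Longrightarrow> x = v \<or> {v, x} \<in> E"
    and h1: "u \<in> W1 \<Longrightarrow> v \<in> W1" and h2: "u \<in> W2 \<Longrightarrow> v \<in> W2"
  shows "int (fdim TYPE('a::field) (cycles TYPE('a) k (flag_complex E W1)))
       - int (fdim TYPE('a) (cycles TYPE('a) k (flag_complex E W1) \<inter> boundaries TYPE('a) k (flag_complex E W2)))
     = int (fdim TYPE('a) (cycles TYPE('a) k {\<sigma>\<in>flag_complex E W1. u \<notin> \<sigma>}))
       - int (fdim TYPE('a) (cycles TYPE('a) k {\<sigma>\<in>flag_complex E W1. u \<notin> \<sigma>}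
             \<inter> boundaries TYPE('a) k {\<sigma>\<in>flag_complex E W2. u \<notin> \<sigma>}))"
proof -
  have fin1: "finite W1" using fin W12 finite_subset by blast
  define K1 where "K1 = flag_complex E W1"
  define K2 where "K2 = flag_complex E W2"
  define K1' where "K1' = {\<sigma>\<in>K1. u \<notin> \<sigma>}"
  define K2' where "K2' = {\<sigma>\<in>K2. u \<notin> \<sigma>}"
  define Z where "Z = cycles TYPE('a) k K1"
  define Z' where "Z' = cycles TYPE('a) k K1'"
  define B where "B = boundaries TYPE('a) k K2"
  define B' where "B' = boundaries TYPE('a) k K2'"
  have K12: "K1 \<subseteq> K2" unfolding K1_def K2_def by (rule flag_mono[OF W12])
  have K12': "K1' \<subseteq> K2'" "K1' \<subseteq> K1" "K2' \<subseteq> K2" using K12 by (auto simp: K1'_def K2'_def)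
  have sZ: "module.subspace fscl Z" and sZ': "module.subspace fscl Z'"
    and sB: "module.subspace fscl B" and sB': "module.subspace fscl B'"
    unfolding Z_def Z'_def B_def B'_def by (rule cycles_subspace boundaries_subspace)+
  have sZB: "module.subspace fscl (Z \<inter> B)"
    using sZ sB module.subspace_inter[OF mod_fscl] by blast
  have bd1: "boundary K1' c = boundary K1 c" if "c \<in> chains TYPE('a) j K1'" for c j
    using bd_del[OF fin1] that unfolding K1'_def K1_def by blast
  have bd2: "boundary K2' c = boundary K2 c" if "c \<in> chains TYPE('a) j K2'" for c j
    using bd_del[OF fin] that unfolding K2'_def K2_def by blast
  have bd12: "boundary K1 c = boundary K2 c" if "c \<in> chains TYPE('a) j K1" for c j
    by (rule boundary_cong) (use that K12 fin1 fin in \<open>auto simp: chains_def K1_def K2_def intro: flag_Ufin\<close>)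
  have Z'Z: "Z' \<subseteq> Z"
  proof
    fix c assume "c \<in> Z'"
    then have "c \<in> chains TYPE('a) k K1'" "boundary K1' c = 0" by (auto simp: Z'_def cycles_def)
    moreover have "c \<in> chains TYPE('a) k K1" using \<open>c \<in> chains TYPE('a) k K1'\<close> chains_mono[OF K12'(2)] by blast
    ultimately show "c \<in> Z" using bd1 by (simp add: Z_def cycles_def)
  qed
  have sum_eq: "{x + y |x y. x \<in> Z' \<and> y \<in> Z \<inter> B} = Z"
  proof
    show "{x + y |x y. x \<in> Z' \<and> y \<in> Z \<inter> B} \<subseteq> Z"
      using Z'Z module.subspace_add[OF mod_fscl sZ] by blast
  next
    show "Z \<subseteq> {x + y |x y. x \<in> Z' \<and> y \<in> Z \<inter> B}"
    proof
      fix z assume "z \<in> Z"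
      then have z: "z \<in> chains TYPE('a) k (flag_complex E W1)" "boundary (flag_complex E W1) z = 0"
        by (auto simp: Z_def cycles_def K1_def)
      obtain d where d: "d \<in> chains TYPE('a) (Suc k) K1"
        and d1: "z - boundary K1 d \<in> chains TYPE('a) k K1'" and d2: "boundary K1 (z - boundary K1 d) = 0"
        using lemA'[OF fin1 g h1 z] unfolding K1_def K1'_def by blast
      have "z - boundary K1 d \<in> Z'" using d1 d2 bd1[OF d1] by (simp add: Z'_def cycles_def)
      moreover have "boundary K1 d \<in> Z"
        using module.subspace_diff[OF mod_fscl sZ \<open>z \<in> Z\<close> Z'Z[THEN subsetD, OF \<open>z - boundary K1 d \<in> Z'\<close>]]
        by simp
      moreover have "boundary K1 d \<in> B"
        using d chains_mono[OF K12, of "TYPE('a)" "Suc k"] bd12[OF d] unfolding B_def boundaries_def by auto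
      ultimately show "z \<in> {x + y |x y. x \<in> Z' \<and> y \<in> Z \<inter> B}"
        by (intro CollectI exI[of _ "z - boundary K1 d"] exI[of _ "boundary K1 d"]) auto
    qed
  qed
  have int_eq: "Z' \<inter> (Z \<inter> B) = Z' \<inter> B'"
  proof
    show "Z' \<inter> (Z \<inter> B) \<subseteq> Z' \<inter> B'"
    proof
      fix x assume x: "x \<in> Z' \<inter> (Z \<inter> B)"
      then obtain c where c: "c \<in> chains TYPE('a) (Suc k) K2" "boundary K2 c = x"
        by (auto simp: B_def boundaries_def)
      have "x \<in> chains TYPE('a) k K1'" using x by (auto simp: Z'_def cycles_def)
      then have "x \<in> chains TYPE('a) k K2'" using chains_mono[OF K12'(1)] by blast
      then obtain c' where c': "c' \<in> chains TYPE('a) (Suc k) K2'" "boundary K2 c' = x"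
        using lemB'[OF fin g h2, of x k c] c unfolding K2_def K2'_def by blast
      have "x = boundary K2' c'" by (simp add: bd2[OF c'(1)] c'(2))
      then have "x \<in> B'" unfolding B'_def boundaries_def using c'(1) by blast
      then show "x \<in> Z' \<inter> B'" using x by blast
    qed
  next
    show "Z' \<inter> B' \<subseteq> Z' \<inter> (Z \<inter> B)"
    proof
      fix x assume x: "x \<in> Z' \<inter> B'"
      then obtain c where c: "c \<in> chains TYPE('a) (Suc k) K2'" "boundary K2' c = x"
        by (auto simp: B'_def boundaries_def)
      have "x \<in> B" using c bd2[OF c(1)] chains_mono[OF K12'(3), of "TYPE('a)" "Suc k"]
        unfolding B_def boundaries_def by auto
      then show "x \<in> Z' \<inter> (Z \<inter> B)" using x Z'Z by blast
    qed
  qed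
  have finK2: "finite K2" unfolding K2_def using flag_fin[OF fin] .
  define F where "F = (\<lambda>\<sigma> \<rho>. if \<rho> = \<sigma> then 1::'a else 0) ` K2"
  have spZ: "Z \<subseteq> module.span fscl F"
    using chains_span[OF finK2, of k] chains_mono[OF K12, of "TYPE('a)" k]
    unfolding Z_def cycles_def F_def by blast
  have "vector_space.dim fscl {x + y |x y. x \<in> Z' \<and> y \<in> Z \<inter> B} + vector_space.dim fscl (Z' \<inter> (Z \<inter> B))
      = vector_space.dim fscl Z' + vector_space.dim fscl (Z \<inter> B)"
    by (rule vector_space.dim_sums_Int_fin[OF vs_fsc sZ' sZB, of F])
       (use spZ Z'Z finK2 in \<open>auto simp: F_def\<close>)
  then have "vector_space.dim fscl Z + vector_space.dim fscl (Z' \<inter> B')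
      = vector_space.dim fscl Z' + vector_space.dim fscl (Z \<inter> B)"
    by (simp only: sum_eq int_eq)
  then show ?thesis
    unfolding fdim_eq Z_def Z'_def B_def B'_def K1'_def K2'_def K1_def K2_def by linarith
qed

lemma edge_form:
  assumes "card e = 2" "u \<in> e"
  obtains x where "e = {u, x}" "x \<noteq> u"
proof -
  obtain a b where ab: "e = {a, b}" "a \<noteq> b" using assms(1) unfolding card_2_iff by blast
  show ?thesis
  proof (cases "a = u")
    case True show ?thesis by (rule that[of b]) (use ab True in auto)
  next
    case False then have "b = u" using ab assms(2) by auto
    show ?thesis by (rule that[of a]) (use ab \<open>b = u\<close> in auto)
  qed
qed

lemma deg_le:
  assumes finE: "finite E" and two: "\<forall>e\<in>E. card e = 2" and g: "u \<noteq> v" "{u, v} \<in> E"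
    "\<And>x. {u, x} \<in> E \<Longrightarrow> x = v \<or> {v, x} \<in> E"
  shows "degree E u \<le> degree E v"
proof -
  define gg where "gg e = (if v \<in> e then e else insert v (e - {u}))" for e
  have "card {e \<in> E. u \<in> e} \<le> card {e \<in> E. v \<in> e}"
  proof (rule card_inj_on_le)
    show "finite {e \<in> E. v \<in> e}" using finE by simp
    show "gg ` {e \<in> E. u \<in> e} \<subseteq> {e \<in> E. v \<in> e}"
    proof
      fix f assume "f \<in> gg ` {e \<in> E. u \<in> e}"
      then obtain e where e: "e \<in> E" "u \<in> e" "f = gg e" by (auto simp del: mem_Collect_eq)
      have "card e = 2" using two e(1) by blast
      then obtain x where x: "e = {u, x}" "x \<noteq> u" using edge_form[of e u] e(2) by blast
      show "f \<in> {e \<in> E. v \<in> e}"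
      proof (cases "v \<in> e")
        case True then show ?thesis using e by (simp add: gg_def)
      next
        case False
        then have "x \<noteq> v" using x by auto
        have "{u, x} \<in> E" using e(1) x(1) by simp
        then have "{v, x} \<in> E" using g(3) \<open>x \<noteq> v\<close> by blast
        moreover have "f = {v, x}" using e x False \<open>x \<noteq> v\<close> by (auto simp: gg_def)
        ultimately show ?thesis by simp
      qed
    qed
    show "inj_on gg {e \<in> E. u \<in> e}"
    proof
      fix e1 e2 assume e1: "e1 \<in> {e \<in> E. u \<in> e}" and e2: "e2 \<in> {e \<in> E. u \<in> e}" and eq: "gg e1 = gg e2"
      have "card e1 = 2" "card e2 = 2" "u \<in> e1" "u \<in> e2" using two e1 e2 by auto
      then obtain x1 x2 where x1: "e1 = {u, x1}" "x1 \<noteq> u" and x2: "e2 = {u, x2}" "x2 \<noteq> u"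
        using edge_form[of e1 u] edge_form[of e2 u] by metis
      have gv: "gg e = {v, x}" if "e = {u, x}" "x \<noteq> u" "v \<notin> e" for e x
        using that by (auto simp: gg_def)
      show "e1 = e2"
      proof (cases "v \<in> e1")
        case T1: True
        show ?thesis
        proof (cases "v \<in> e2")
          case True then show ?thesis using eq T1 by (simp add: gg_def)
        next
          case False
          have "gg e1 = e1" using T1 by (simp add: gg_def)
          then have "e1 = {v, x2}" using eq gv[OF x2 False] by simp
          then have "u \<in> {v, x2}" using \<open>u \<in> e1\<close> by blast
          then show ?thesis using g(1) x2(2) by simp
        qed
      next
        case F1: False
        show ?thesis
        proof (cases "v \<in> e2")
          case True
          have "gg e2 = e2" using True by (simp add: gg_def)
          then have "e2 = {v, x1}" using eq gv[OF x1 F1] by simp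
          then have "u \<in> {v, x1}" using \<open>u \<in> e2\<close> by blast
          then show ?thesis using g(1) x1(2) by simp
        next
          case False
          have "{v, x1} = {v, x2}" using eq gv[OF x1 F1] gv[OF x2 False] by simp
          moreover have "x1 \<noteq> v" "x2 \<noteq> v" using F1 False x1 x2 by auto
          ultimately have "x1 = x2" by (auto simp: doubleton_eq_iff)
          then show ?thesis using x1 x2 by simp
        qed
      qed
    qed
  qed
  then show ?thesis unfolding degree_def by simp
qed






lemma alpha_mono:
  assumes "\<forall>i<m. (\<alpha>::nat \<Rightarrow> real) i < \<alpha> (Suc i)" "a \<le> b" "b \<le> m"
  shows "\<alpha> a \<le> \<alpha> b"
  using assms(2,3)
proof (induction b)
  case 0 then show ?case by simp
next
  case (Suc b)
  show ?case
  proof (cases "a = Suc b")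
    case True then show ?thesis by simp
  next
    case False
    then have "\<alpha> a \<le> \<alpha> b" using Suc by simp
    also have "\<alpha> b < \<alpha> (Suc b)" using assms(1) Suc by simp
    finally show ?thesis by simp
  qed
qed

lemma flag_delete:
  "flag_complex (del_vertex_E E u) {w \<in> del_vertex_V V u. P w} = {\<sigma>\<in>flag_complex E {w\<in>V. P w}. u \<notin> \<sigma>}"
  unfolding flag_complex_def del_vertex_E_def del_vertex_V_def by auto

lemma main_f:
  fixes V :: "'v::linorder set" and E :: "'v set set"
  assumes finV: "finite V" and uV: "u \<in> V" and vV: "v \<in> V"
    and g: "u \<noteq> v" "{u, v} \<in> E" "\<And>x. {u, x} \<in> E \<Longrightarrow> x = v \<or> {v, x} \<in> E"
    and th: "thresholds_for V f \<alpha> m" and fuv: "f u \<le> f v"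
  shows "PD_v TYPE('a::field) k V E f \<alpha> m
       = PD_v TYPE('a) k (del_vertex_V V u) (del_vertex_E E u) f \<alpha> m"
proof -
  have pb: "pers_betti TYPE('a) k (superlevel_filtration V E f \<alpha> m) m i j
      = pers_betti TYPE('a) k (superlevel_filtration (del_vertex_V V u) (del_vertex_E E u) f \<alpha> m) m i j" for i j
  proof (cases "i \<le> j \<and> j \<le> m")
    case True
    define W1 where "W1 = {w\<in>V. \<alpha> (m - i) \<le> f w}"
    define W2 where "W2 = {w\<in>V. \<alpha> (m - j) \<le> f w}"
    have amono: "\<alpha> (m - j) \<le> \<alpha> (m - i)"
      using alpha_mono[of m \<alpha> "m - j" "m - i"] th True by (auto simp: thresholds_for_def)
    have "W1 \<subseteq> W2" using amono by (auto simp: W1_def W2_def)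
    moreover have "finite W2" using finV by (simp add: W2_def)
    moreover have "u \<in> W1 \<Longrightarrow> v \<in> W1" "u \<in> W2 \<Longrightarrow> v \<in> W2" using fuv vV by (auto simp: W1_def W2_def)
    ultimately have r: "int (fdim TYPE('a) (cycles TYPE('a) k (flag_complex E W1)))
       - int (fdim TYPE('a) (cycles TYPE('a) k (flag_complex E W1) \<inter> boundaries TYPE('a) k (flag_complex E W2)))
     = int (fdim TYPE('a) (cycles TYPE('a) k {\<sigma>\<in>flag_complex E W1. u \<notin> \<sigma>}))
       - int (fdim TYPE('a) (cycles TYPE('a) k {\<sigma>\<in>flag_complex E W1. u \<notin> \<sigma>}
             \<inter> boundaries TYPE('a) k {\<sigma>\<in>flag_complex E W2. u \<notin> \<sigma>}))"
      using rank_eq[OF _ _ g] by blast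
    show ?thesis
      using True r unfolding pers_betti_def superlevel_filtration_def flag_delete W1_def W2_def
      by simp
  next
    case False then show ?thesis unfolding pers_betti_def by (simp only: if_not_P[OF False] if_False)
  qed
  show ?thesis
    unfolding PD_v_def persistence_diagram_def pb ..
qed

theorem mainTheorem5:
  fixes V :: "'v::linorder set" and E :: "'v set set" and f :: "'v \<Rightarrow> real"
    and \<alpha> :: "nat \<Rightarrow> real" and m :: nat and u v :: 'v
  assumes "simple_graph V E"
    and "dominated_by V E u v"
  shows "(thresholds_for V f \<alpha> m \<and> f u \<le> f v \<longrightarrow>
           (\<forall>k. PD_v TYPE('a::field) k V E f \<alpha> m
                 = PD_v TYPE('a) k (del_vertex_V V u) (del_vertex_E E u) f \<alpha> m))
       \<and> (thresholds_for V (degree E) \<alpha> m \<longrightarrow>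
           (\<forall>k. PD_v TYPE('a) k V E (degree E) \<alpha> m
                 = PD_v TYPE('a) k (del_vertex_V V u) (del_vertex_E E u) (degree E) \<alpha> m))"
proof -
  have finV: "finite V" and Esub: "\<forall>e\<in>E. e \<subseteq> V \<and> card e = 2"
    using assms(1) unfolding simple_graph_def by auto
  have uV: "u \<in> V" and vV: "v \<in> V" and uv: "u \<noteq> v"
    and nb: "closed_nbhd E u \<subseteq> closed_nbhd E v"
    using assms(2) unfolding dominated_by_def by auto
  have "u \<in> closed_nbhd E v" using nb unfolding closed_nbhd_def by auto
  then have "{v, u} \<in> E" using uv unfolding closed_nbhd_def by auto
  then have euv: "{u, v} \<in> E" by (simp add: insert_commute)
  have dom: "x = v \<or> {v, x} \<in> E" if "{u, x} \<in> E" for x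
  proof -
    have "x \<in> closed_nbhd E u" using that unfolding closed_nbhd_def by auto
    then have "x \<in> closed_nbhd E v" using nb by blast
    then show ?thesis unfolding closed_nbhd_def by auto
  qed
  have finE: "finite E"
    by (rule finite_subset[of _ "Pow V"]) (use Esub finV in auto)
  have two: "\<forall>e\<in>E. card e = 2" using Esub by auto
  have deg: "degree E u \<le> degree E v" by (rule deg_le[OF finE two uv euv dom])
  show ?thesis
  proof (intro conjI impI allI)
    fix k assume "thresholds_for V f \<alpha> m \<and> f u \<le> f v"
    then show "PD_v TYPE('a::field) k V E f \<alpha> m
                 = PD_v TYPE('a) k (del_vertex_V V u) (del_vertex_E E u) f \<alpha> m"
      using main_f[OF finV uV vV uv euv dom] by blast
  next
    fix k assume "thresholds_for V (degree E) \<alpha> m"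
    then show "PD_v TYPE('a) k V E (degree E) \<alpha> m
                 = PD_v TYPE('a) k (del_vertex_V V u) (del_vertex_E E u) (degree E) \<alpha> m"
      using main_f[OF finV uV vV uv euv dom _ deg] by blast
  qed
qed

end
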